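(* Let $\mathbb K$ be a field of characteristic $0$ and $N\ge2$. The image of the weight system $W^{\mathrm{St}}_{\mathfrak{so}_N}:\mathcal A(\downarrow\downarrow)_{\mathbb K}\to\mathrm{End}(\mathbb K^N)^{\otimes2}$ associated with $(\mathfrak{so}_N(\mathbb K),B_0,\mathrm{St})$ is a commutative subalgebra.
   Context: Jacobi diagrams on an oriented compact $1$-manifold $X$ span $\mathcal A(X)$ modulo AS, IHX, STU; $\mathcal A(X)_{\mathbb K}=\mathcal A(X)\otimes\mathbb K$; $\downarrow\downarrow$ is two downward oriented strands, and $\mathcal A(\downarrow\downarrow)$ is an algebra under stacking. For a metrized Lie algebra $(\mathfrak g,\langle\cdot,\cdot\rangle)$ over $\mathbb K$, the universal weight system $W_{\mathfrak g}:\mathcal A(\downarrow^{\otimes n})_{\mathbb K}\to U(\mathfrak g)^{\otimes n}$ is the algebra homomorphism obtained by putting on each edge the Casimir tensor $\Omega=\sum_av_a\otimes v^a$ (basis and dual basis w.r.t. the form), at each trivalent vertex $-\mathbf t$ where $\mathbf t\in\mathfrak g^{\otimes3}$ corresponds to $(x,y,z)\mapsto\langle[x,y],z\rangle$ (factors in cyclic order), contracting along edges and multiplying in $U(\mathfrak g)$ along each strand in its orientation order; for a representation $\rho:\mathfrak g\to\mathrm{End}(V)$, $W^\rho_{\mathfrak g}=U(\rho)^{\otimes n}\circ W_{\mathfrak g}$. $\mathfrak{so}_N(\mathbb K)$ is the Lie algebra of antisymmetric $N\times N$ matrices, $B_0(x,y)=\mathrm{tr}(xy)$ its trace form, and $\mathrm{St}$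 the standard representation on $\mathbb K^N$. *)

theory Defs
  imports "Jordan_Normal_Form.Matrix" "HOL-Library.FuncSet"
begin

text \<open>Elements of so_N(K) are antisymmetric N x N matrices; St is the inclusion
  into End(K^N) = N x N matrices.\<close>

definition soN :: "nat \<Rightarrow> 'k::field mat set" where
  "soN N = {x \<in> carrier_mat N N. transpose_mat x = - x}"

definition mtrace :: "'k::field mat \<Rightarrow> 'k" where
  "mtrace x = (\<Sum>i<dim_row x. x $$ (i, i))"

definition B0 :: "'k::field mat \<Rightarrow> 'k mat \<Rightarrow> 'k" where
  "B0 x y = mtrace (x * y)"

definition soidx :: "nat \<Rightarrow> (nat \<times> nat) set" where
  "soidx N = {(a, b). a < b \<and> b < N}"

definition sobasis :: "nat \<Rightarrow> nat \<times> nat \<Rightarrow> 'k::field mat" where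
  "sobasis N p = mat N N (\<lambda>(i, j).
      (if i = fst p \<and> j = snd p then 1 else 0) - (if i = snd p \<and> j = fst p then 1 else 0))"

definition is_dual_basis :: "nat \<Rightarrow> (nat \<times> nat \<Rightarrow> 'k::field mat) \<Rightarrow> bool" where
  "is_dual_basis N w \<longleftrightarrow>
     (\<forall>\<beta>\<in>soidx N. w \<beta> \<in> soN N) \<and>
     (\<forall>\<alpha>\<in>soidx N. \<forall>\<beta>\<in>soidx N. B0 (sobasis N \<alpha>) (w \<beta>) = (if \<alpha> = \<beta> then 1 else 0))"

text \<open>A Jacobi diagram on two oriented strands, encoded by half-edges.
  There are jd_edges D edges; edge e has the two half-edges 2e and 2e+1.
  jd_tri D lists the trivalent vertices, each as the triple of incident half-edges
  in its cyclic order; jd_str1 D / jd_str2 D list the half-edges ending at univalent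
  vertices on strand 1 / strand 2, in the order of the strand orientation.\<close>

record jdiag =
  jd_edges :: nat
  jd_tri :: "(nat \<times> nat \<times> nat) list"
  jd_str1 :: "nat list"
  jd_str2 :: "nat list"

definition wf_jdiag :: "jdiag \<Rightarrow> bool" where
  "wf_jdiag D \<longleftrightarrow>
     mset (concat (map (\<lambda>(a, b, c). [a, b, c]) (jd_tri D)) @ jd_str1 D @ jd_str2 D)
       = mset [0..<2 * jd_edges D]"

text \<open>An element of End(K^N) (x) End(K^N) = End(K^N (x) K^N) is represented by its
  matrix entries X (i1,i2) (j1,j2) (so A (x) B has entries A_{i1 j1} B_{i2 j2}),
  with entries outside the range {0..<N}^2 set to 0.\<close>

type_synonym 'k op2 = "nat \<times> nat \<Rightarrow> nat \<times> nat \<Rightarrow> 'k"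

definition idx2 :: "nat \<Rightarrow> (nat \<times> nat) set" where
  "idx2 N = {..<N} \<times> {..<N}"

definition mult2 :: "nat \<Rightarrow> 'k::field op2 \<Rightarrow> 'k op2 \<Rightarrow> 'k op2" where
  "mult2 N X Y = (\<lambda>p q. if p \<in> idx2 N \<and> q \<in> idx2 N
       then (\<Sum>r\<in>idx2 N. X p r * Y r q) else 0)"

definition one2 :: "nat \<Rightarrow> 'k::field op2" where
  "one2 N = (\<lambda>p q. if p \<in> idx2 N \<and> p = q then 1 else 0)"

text \<open>Each edge e carries the Casimir tensor sum_alpha v_alpha (x) v^alpha: given a
  labelling lab of edges by basis indices, half-edge 2e carries v_{lab e} and
  half-edge 2e+1 carries the dual vector v^{lab e}.\<close>

definition hvec :: "nat \<Rightarrow> (nat \<times> nat \<Rightarrow> 'k::field mat) \<Rightarrow> (nat \<Rightarrow> nat \<times> nat) \<Rightarrow> nat \<Rightarrow> 'k mat" where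
  "hvec N w lab h = (if even h then sobasis N (lab (h div 2)) else w (lab (h div 2)))"

text \<open>Trivalent vertex with legs carrying x,y,z (cyclic order): contraction with -t,
  i.e. the scalar -B_0([x,y],z).\<close>
definition vertex_val :: "'k::field mat \<Rightarrow> 'k mat \<Rightarrow> 'k mat \<Rightarrow> 'k" where
  "vertex_val x y z = - B0 (x * y - y * x) z"

definition strand_prod :: "nat \<Rightarrow> (nat \<times> nat \<Rightarrow> 'k::field mat) \<Rightarrow> (nat \<Rightarrow> nat \<times> nat) \<Rightarrow> nat list \<Rightarrow> 'k mat" where
  "strand_prod N w lab hs = foldr (\<lambda>h M. hvec N w lab h * M) hs (1\<^sub>m N)"

definition W_St :: "nat \<Rightarrow> (nat \<times> nat \<Rightarrow> 'k::field mat) \<Rightarrow> jdiag \<Rightarrow> 'k op2" where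
  "W_St N w D = (\<lambda>(i1, i2) (j1, j2).
     if (i1, i2) \<in> idx2 N \<and> (j1, j2) \<in> idx2 N then
       (\<Sum>lab \<in> {..<jd_edges D} \<rightarrow>\<^sub>E soidx N.
          prod_list (map (\<lambda>(a, b, c). vertex_val (hvec N w lab a) (hvec N w lab b) (hvec N w lab c))
                         (jd_tri D))
          * strand_prod N w lab (jd_str1 D) $$ (i1, j1)
          * strand_prod N w lab (jd_str2 D) $$ (i2, j2))
     else 0)"

text \<open>The image of W^St on A(two strands)_K: since A is spanned by Jacobi diagrams and
  W^St factors through the relations, the image is the K-span of the values on diagrams.\<close>
definition W_St_image :: "nat \<Rightarrow> (nat \<times> nat \<Rightarrow> 'k::field mat) \<Rightarrow> 'k op2 set" where
  "W_St_image N w = {(\<lambda>p q. \<Sum>i<n. c i * W_St N w (Ds i) p q) | (n::nat) (c::nat \<Rightarrow> 'k) (Ds::nat \<Rightarrow> jdiag).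
                        \<forall>i<n. wf_jdiag (Ds i)}"

end

theory Submission
  imports Defs
begin


lemma sobasis_carrier[simp]: "sobasis N p \<in> carrier_mat N N"
  by (simp add: sobasis_def)

lemma sobasis_dim[simp]: "dim_row (sobasis N p) = N" "dim_col (sobasis N p) = N"
  by (simp_all add: sobasis_def)

lemma sobasis_entry:
  "i < N \<Longrightarrow> j < N \<Longrightarrow> sobasis N p $$ (i,j) =
     (if i = fst p \<and> j = snd p then 1 else 0) - (if i = snd p \<and> j = fst p then 1 else 0)"
  by (simp add: sobasis_def)

lemma mtrace_mult:
  assumes "A \<in> carrier_mat N N" "B \<in> carrier_mat N N"
  shows "mtrace (A * B) = (\<Sum>i<N. \<Sum>k<N. A $$ (i,k) * B $$ (k,i))"
  using assms by (simp add: mtrace_def scalar_prod_def atLeast0LessThan)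

lemma ind_diff_mult: "((if P then 1 else 0) - (if Q then 1 else 0)) * (y::'k::ring_1) = (if P then y else 0) - (if Q then y else 0)"
  by simp

lemma double_delta:
  fixes N :: nat
  assumes "a < N" "b < N"
  shows "(\<Sum>i<N. \<Sum>k<N. if i = a \<and> k = b then f k i else 0) = (f b a :: 'k::comm_ring)"
proof -
  have "(\<Sum>k<N. if i = a \<and> k = b then f k i else 0) = (if i = a then f b a else 0)" for i
    using assms by (cases "i = a") (simp_all add: sum.delta)
  thus ?thesis using assms by (simp add: sum.delta)
qed

lemma B0_sobasis:
  assumes x: "x \<in> carrier_mat N N" and ab: "a < N" "b < N" "a \<noteq> b"
  shows "B0 (sobasis N (a,b)) x = x $$ (b,a) - x $$ (a,b)"
proof -
  have "B0 (sobasis N (a,b)) x = (\<Sum>i<N. \<Sum>k<N.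
     ((if i = a \<and> k = b then 1 else 0) - (if i = b \<and> k = a then 1 else 0)) * x $$ (k,i))"
    unfolding B0_def mtrace_mult[OF sobasis_carrier x] by (intro sum.cong refl) (simp add: sobasis_entry)
  also have "\<dots> = (\<Sum>i<N. \<Sum>k<N. (if i = a \<and> k = b then x $$ (k,i) else 0)
      - (if i = b \<and> k = a then x $$ (k,i) else 0))"
    by (simp only: ind_diff_mult)
  also have "\<dots> = (\<Sum>i<N. \<Sum>k<N. (if i = a \<and> k = b then x $$ (k,i) else 0))
      - (\<Sum>i<N. \<Sum>k<N. (if i = b \<and> k = a then x $$ (k,i) else 0))"
    by (simp only: sum_subtractf)
  also have "\<dots> = x $$ (b,a) - x $$ (a,b)"
    using double_delta[of a N b "\<lambda>k i. x $$ (k,i)"] double_delta[of b N a "\<lambda>k i. x $$ (k,i)"] ab by simp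
  finally show ?thesis .
qed

lemma dual_w:
  fixes w :: "nat \<times> nat \<Rightarrow> 'k::field_char_0 mat"
  assumes d: "is_dual_basis N w" and \<beta>: "\<beta> \<in> soidx N"
  shows "w \<beta> = (-1/2) \<cdot>\<^sub>m sobasis N \<beta>"
proof -
  let ?x = "w \<beta>"
  have xs: "?x \<in> soN N" using d \<beta> by (simp add: is_dual_basis_def)
  hence x: "?x \<in> carrier_mat N N" and tr: "transpose_mat ?x = - ?x" by (auto simp: soN_def)
  have anti: "?x $$ (i,j) = - ?x $$ (j,i)" if "i < N" "j < N" for i j
  proof -
    have "transpose_mat ?x $$ (j,i) = (- ?x) $$ (j,i)" using tr by simp
    thus ?thesis using that x by simp
  qed
  have up: "?x $$ (i,j) = (-1/2) * (if (i,j) = \<beta> then 1 else 0)" if "i < j" "j < N" for i j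
  proof -
    have "(i,j) \<in> soidx N" using that by (simp add: soidx_def)
    hence "B0 (sobasis N (i,j)) ?x = (if (i,j) = \<beta> then 1 else 0)" using d \<beta> by (simp add: is_dual_basis_def)
    moreover have "B0 (sobasis N (i,j)) ?x = -2 * ?x $$ (i,j)"
      using B0_sobasis[OF x, of i j] anti[of j i] that by simp
    ultimately show ?thesis by (cases "(i,j) = \<beta>") (simp_all add: field_simps, metis minus_equation_iff)
  qed
  obtain a b where b: "\<beta> = (a,b)" "a < b" "b < N" using \<beta> by (auto simp: soidx_def)
  show ?thesis
  proof (rule eq_matI)
    fix i j assume ij: "i < dim_row ((-1/2) \<cdot>\<^sub>m sobasis N \<beta>)" "j < dim_col ((-1/2) \<cdot>\<^sub>m sobasis N \<beta>)"
    hence ij: "i < N" "j < N" by auto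
    consider "i < j" | "i = j" | "j < i" by linarith
    thus "?x $$ (i,j) = ((-1/2) \<cdot>\<^sub>m sobasis N \<beta>) $$ (i,j)"
    proof cases
      case 1 thus ?thesis using up[OF 1 ij(2)] ij b by (auto simp: sobasis_entry)
    next
      case 2 thus ?thesis using anti[OF ij] ij b by (auto simp: sobasis_entry)
    next
      case 3 thus ?thesis using up[OF 3 ij(1)] anti[OF ij] ij b by (auto simp: sobasis_entry)
    qed
  qed (use x in auto)
qed



definition trm :: "nat \<Rightarrow> (nat \<Rightarrow> 'k::field) \<Rightarrow> (nat \<Rightarrow> nat) \<Rightarrow> 'k mat \<Rightarrow> 'k mat" where
  "trm N \<rho> \<pi> M = mat N N (\<lambda>(i,j). \<rho> i * \<rho> j * M $$ (\<pi> i, \<pi> j))"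

definition good :: "nat \<Rightarrow> (nat \<Rightarrow> 'k::field) \<Rightarrow> (nat \<Rightarrow> nat) \<Rightarrow> bool" where
  "good N \<rho> \<pi> \<longleftrightarrow> (\<forall>i<N. \<pi> i < N \<and> \<pi> (\<pi> i) = i) \<and> (\<forall>i. \<rho> i * \<rho> i = 1)"

lemma trm_carrier[simp]: "trm N \<rho> \<pi> M \<in> carrier_mat N N"
  by (simp add: trm_def)

lemma trm_dim[simp]: "dim_row (trm N \<rho> \<pi> M) = N" "dim_col (trm N \<rho> \<pi> M) = N"
  by (simp_all add: trm_def)

lemma trm_entry: "i < N \<Longrightarrow> j < N \<Longrightarrow> trm N \<rho> \<pi> M $$ (i,j) = \<rho> i * \<rho> j * M $$ (\<pi> i, \<pi> j)"
  by (simp add: trm_def)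

lemma good_sum_reindex:
  assumes g: "good N \<rho> \<pi>"
  shows "(\<Sum>k<N. f (\<pi> k)) = (\<Sum>k<N. f k)"
  by (rule sum.reindex_bij_witness[where i=\<pi> and j=\<pi>]) (use g in \<open>auto simp: good_def\<close>)

lemma trm_mult:
  assumes g: "good N \<rho> \<pi>" and A: "A \<in> carrier_mat N N" and B: "B \<in> carrier_mat N N"
  shows "trm N \<rho> \<pi> (A * B) = trm N \<rho> \<pi> A * trm N \<rho> \<pi> B"
proof (rule eq_matI)
  fix i j assume "i < dim_row (trm N \<rho> \<pi> A * trm N \<rho> \<pi> B)" "j < dim_col (trm N \<rho> \<pi> A * trm N \<rho> \<pi> B)"
  hence ij: "i < N" "j < N" by auto
  have pi: "\<pi> i < N" "\<pi> j < N" using g ij by (auto simp: good_def)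
  have "(trm N \<rho> \<pi> A * trm N \<rho> \<pi> B) $$ (i,j) = (\<Sum>k<N. trm N \<rho> \<pi> A $$ (i,k) * trm N \<rho> \<pi> B $$ (k,j))"
    using ij by (simp add: scalar_prod_def atLeast0LessThan)
  also have "\<dots> = (\<Sum>k<N. \<rho> i * \<rho> j * (A $$ (\<pi> i, \<pi> k) * B $$ (\<pi> k, \<pi> j)) * (\<rho> k * \<rho> k))"
    using ij by (intro sum.cong refl) (simp add: trm_entry ac_simps)
  also have "\<dots> = (\<Sum>k<N. \<rho> i * \<rho> j * (A $$ (\<pi> i, \<pi> k) * B $$ (\<pi> k, \<pi> j)))"
    using g by (simp add: good_def)
  also have "\<dots> = (\<Sum>k<N. \<rho> i * \<rho> j * (A $$ (\<pi> i, k) * B $$ (k, \<pi> j)))"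
    using good_sum_reindex[OF g, of "\<lambda>k. \<rho> i * \<rho> j * (A $$ (\<pi> i, k) * B $$ (k, \<pi> j))"] by simp
  also have "\<dots> = trm N \<rho> \<pi> (A * B) $$ (i,j)"
    using ij pi A B by (simp add: trm_entry scalar_prod_def atLeast0LessThan sum_distrib_left)
  finally show "trm N \<rho> \<pi> (A * B) $$ (i,j) = (trm N \<rho> \<pi> A * trm N \<rho> \<pi> B) $$ (i,j)" by simp
qed auto

lemma trm_one:
  assumes g: "good N \<rho> \<pi>"
  shows "trm N \<rho> \<pi> (1\<^sub>m N) = 1\<^sub>m N"
proof (rule eq_matI)
  fix i j assume "i < dim_row (1\<^sub>m N :: 'a mat)" "j < dim_col (1\<^sub>m N :: 'a mat)"
  hence ij: "i < N" "j < N" by auto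
  have pi: "\<pi> i < N" "\<pi> j < N" "\<pi> (\<pi> i) = i" "\<pi> (\<pi> j) = j" using g ij by (auto simp: good_def)
  hence "(\<pi> i = \<pi> j) = (i = j)" by metis
  thus "trm N \<rho> \<pi> (1\<^sub>m N) $$ (i,j) = (1\<^sub>m N :: 'a mat) $$ (i,j)"
    using ij pi g by (simp add: trm_entry good_def)
qed auto

lemma trm_smult: "trm N \<rho> \<pi> (c \<cdot>\<^sub>m M) = c \<cdot>\<^sub>m trm N \<rho> \<pi> M"
  if "M \<in> carrier_mat N N" "good N \<rho> \<pi>"
  using that by (intro eq_matI) (auto simp: trm_entry good_def)

lemma trm_minus: "trm N \<rho> \<pi> (A - B) = trm N \<rho> \<pi> A - trm N \<rho> \<pi> B"
  if "A \<in> carrier_mat N N" "B \<in> carrier_mat N N" "good N \<rho> \<pi>"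
  using that by (intro eq_matI) (auto simp: trm_entry good_def algebra_simps)

lemma mtrace_trm:
  assumes g: "good N \<rho> \<pi>" and M: "M \<in> carrier_mat N N"
  shows "mtrace (trm N \<rho> \<pi> M) = mtrace M"
proof -
  have "mtrace (trm N \<rho> \<pi> M) = (\<Sum>i<N. M $$ (\<pi> i, \<pi> i))"
    unfolding mtrace_def using g by (intro sum.cong) (auto simp: trm_entry good_def)
  also have "\<dots> = mtrace M" using good_sum_reindex[OF g, of "\<lambda>i. M $$ (i,i)"] M by (simp add: mtrace_def)
  finally show ?thesis .
qed

lemma vertex_val_trm:
  assumes g: "good N \<rho> \<pi>" and c: "x \<in> carrier_mat N N" "y \<in> carrier_mat N N" "z \<in> carrier_mat N N"
  shows "vertex_val (trm N \<rho> \<pi> x) (trm N \<rho> \<pi> y) (trm N \<rho> \<pi> z) = vertex_val x y z"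
proof -
  have "trm N \<rho> \<pi> x * trm N \<rho> \<pi> y - trm N \<rho> \<pi> y * trm N \<rho> \<pi> x = trm N \<rho> \<pi> (x * y - y * x)"
    using g c by (simp add: trm_mult trm_minus)
  moreover have xy: "x * y - y * x \<in> carrier_mat N N" using c by (auto intro!: minus_carrier_mat)
  ultimately have "(trm N \<rho> \<pi> x * trm N \<rho> \<pi> y - trm N \<rho> \<pi> y * trm N \<rho> \<pi> x) * trm N \<rho> \<pi> z
         = trm N \<rho> \<pi> ((x * y - y * x) * z)"
    using trm_mult[OF g xy c(3)] by simp
  moreover have "(x * y - y * x) * z \<in> carrier_mat N N" using c by (auto intro!: minus_carrier_mat)
  ultimately show ?thesis unfolding vertex_val_def B0_def using mtrace_trm[OF g] by simp
qed

lemma smult_smult_mat: "a \<cdot>\<^sub>m (b \<cdot>\<^sub>m A) = (a * b) \<cdot>\<^sub>m (A :: 'k::comm_ring mat)"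
  by (intro eq_matI) (auto simp: ac_simps)

lemma vertex_val_smult:
  fixes x y z :: "'k::field mat"
  assumes c: "x \<in> carrier_mat N N" "y \<in> carrier_mat N N" "z \<in> carrier_mat N N"
  shows "vertex_val (a \<cdot>\<^sub>m x) (b \<cdot>\<^sub>m y) (c \<cdot>\<^sub>m z) = a * b * c * vertex_val x y z"
proof -
  have "(a \<cdot>\<^sub>m x * (b \<cdot>\<^sub>m y) - b \<cdot>\<^sub>m y * (a \<cdot>\<^sub>m x)) * (c \<cdot>\<^sub>m z) = (a * b * c) \<cdot>\<^sub>m ((x * y - y * x) * z)"
    using c by (intro eq_matI) (auto simp: scalar_prod_def sum_distrib_left algebra_simps
        intro!: sum.cong)
  moreover have "mtrace (k \<cdot>\<^sub>m M) = k * mtrace M" if "M \<in> carrier_mat N N" for k and M :: "'k mat"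
    using that by (simp add: mtrace_def sum_distrib_left)
  moreover have "(x * y - y * x) * z \<in> carrier_mat N N" using c by (auto intro!: minus_carrier_mat)
  ultimately show ?thesis unfolding vertex_val_def B0_def using c by simp
qed



definition phi :: "(nat \<Rightarrow> nat) \<Rightarrow> nat \<times> nat \<Rightarrow> nat \<times> nat" where
  "phi \<pi> p = (min (\<pi> (fst p)) (\<pi> (snd p)), max (\<pi> (fst p)) (\<pi> (snd p)))"

definition tau :: "(nat \<Rightarrow> 'k::field) \<Rightarrow> (nat \<Rightarrow> nat) \<Rightarrow> nat \<times> nat \<Rightarrow> 'k" where
  "tau \<rho> \<pi> p = \<rho> (\<pi> (fst p)) * \<rho> (\<pi> (snd p)) * (if \<pi> (fst p) < \<pi> (snd p) then 1 else -1)"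

lemma good_inj: "good N \<rho> \<pi> \<Longrightarrow> i < N \<Longrightarrow> a < N \<Longrightarrow> (\<pi> i = a) = (i = \<pi> a)"
  unfolding good_def by metis

lemma good_ne: "good N \<rho> \<pi> \<Longrightarrow> x < N \<Longrightarrow> y < N \<Longrightarrow> x \<noteq> y \<Longrightarrow> \<pi> x \<noteq> \<pi> y"
  unfolding good_def by metis

lemma phi_soidx:
  assumes g: "good N \<rho> \<pi>" and p: "p \<in> soidx N" shows "phi \<pi> p \<in> soidx N"
proof -
  obtain x y where xy: "p = (x,y)" "x < y" "y < N" using p by (auto simp: soidx_def)
  have "\<pi> x \<noteq> \<pi> y" using good_ne[OF g, of x y] xy by simp
  moreover have "\<pi> x < N" "\<pi> y < N" using g xy by (auto simp: good_def)
  ultimately show ?thesis by (auto simp: soidx_def phi_def xy min_def max_def)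
qed

lemma phi_phi: "good N \<rho> \<pi> \<Longrightarrow> p \<in> soidx N \<Longrightarrow> phi \<pi> (phi \<pi> p) = p"
  unfolding good_def soidx_def phi_def
  by (auto simp: min_def max_def)

lemma tau_sq: "good N \<rho> \<pi> \<Longrightarrow> tau \<rho> \<pi> p * tau \<rho> \<pi> p = 1"
  unfolding good_def tau_def
  by (simp add: algebra_simps)

lemma sign_lemma:
  fixes r :: "nat \<Rightarrow> 'k::field"
  assumes ne: "pa \<noteq> pb"
  shows "r i * r j * ((if i = pa \<and> j = pb then 1 else 0) - (if i = pb \<and> j = pa then 1 else 0)) =
   (r pa * r pb * (if pa < pb then 1 else -1)) *
   ((if i = min pa pb \<and> j = max pa pb then 1 else 0) - (if i = max pa pb \<and> j = min pa pb then 1 else 0))"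
proof (cases "pa < pb")
  case True
  hence mm: "min pa pb = pa" "max pa pb = pb" by auto
  show ?thesis unfolding mm using True ne
    by (cases "i = pa \<and> j = pb"; cases "i = pb \<and> j = pa") (auto simp: mult.commute[of "r pb" "r pa"])
next
  case False
  hence mm: "min pa pb = pb" "max pa pb = pa" by auto
  show ?thesis unfolding mm using False ne
    by (cases "i = pa \<and> j = pb"; cases "i = pb \<and> j = pa") (auto simp: mult.commute[of "r pb" "r pa"])
qed

lemma trm_sobasis:
  assumes g: "good N \<rho> \<pi>" and al: "\<alpha> \<in> soidx N"
  shows "trm N \<rho> \<pi> (sobasis N \<alpha>) = tau \<rho> \<pi> \<alpha> \<cdot>\<^sub>m sobasis N (phi \<pi> \<alpha>)"
proof (rule eq_matI)
  obtain a b where ab: "\<alpha> = (a,b)" "a < b" "b < N" using al by (auto simp: soidx_def)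
  fix i j assume "i < dim_row (tau \<rho> \<pi> \<alpha> \<cdot>\<^sub>m sobasis N (phi \<pi> \<alpha>))"
     "j < dim_col (tau \<rho> \<pi> \<alpha> \<cdot>\<^sub>m sobasis N (phi \<pi> \<alpha>))"
  hence ij: "i < N" "j < N" by auto
  have pi: "\<pi> i < N" "\<pi> j < N" "\<pi> a < N" "\<pi> b < N" using g ij ab by (auto simp: good_def)
  have e: "(\<pi> i = a) = (i = \<pi> a)" "(\<pi> i = b) = (i = \<pi> b)" "(\<pi> j = a) = (j = \<pi> a)" "(\<pi> j = b) = (j = \<pi> b)"
    using good_inj[OF g] ij ab by auto
  have ne: "\<pi> a \<noteq> \<pi> b" using good_ne[OF g, of a b] ab by simp
  have L: "trm N \<rho> \<pi> (sobasis N \<alpha>) $$ (i,j) = \<rho> i * \<rho> j *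
     ((if i = \<pi> a \<and> j = \<pi> b then 1 else 0) - (if i = \<pi> b \<and> j = \<pi> a then 1 else 0))"
    using ij pi by (simp add: trm_entry sobasis_entry ab e)
  have R: "(tau \<rho> \<pi> \<alpha> \<cdot>\<^sub>m sobasis N (phi \<pi> \<alpha>)) $$ (i,j) = tau \<rho> \<pi> \<alpha> *
     ((if i = fst (phi \<pi> \<alpha>) \<and> j = snd (phi \<pi> \<alpha>) then 1 else 0) - (if i = snd (phi \<pi> \<alpha>) \<and> j = fst (phi \<pi> \<alpha>) then 1 else 0))"
    using ij by (simp add: sobasis_entry)
  have M: "\<rho> i * \<rho> j *
     ((if i = \<pi> a \<and> j = \<pi> b then 1 else 0) - (if i = \<pi> b \<and> j = \<pi> a then 1 else 0)) = tau \<rho> \<pi> \<alpha> *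
     ((if i = fst (phi \<pi> \<alpha>) \<and> j = snd (phi \<pi> \<alpha>) then 1 else 0) - (if i = snd (phi \<pi> \<alpha>) \<and> j = fst (phi \<pi> \<alpha>) then 1 else 0))"
  proof -
    have t: "tau \<rho> \<pi> \<alpha> = \<rho> (\<pi> a) * \<rho> (\<pi> b) * (if \<pi> a < \<pi> b then 1 else -1)" by (simp add: tau_def ab)
    have p: "fst (phi \<pi> \<alpha>) = min (\<pi> a) (\<pi> b)" "snd (phi \<pi> \<alpha>) = max (\<pi> a) (\<pi> b)" by (simp_all add: phi_def ab)
    show ?thesis unfolding t p by (rule sign_lemma[OF ne])
  qed
  show "trm N \<rho> \<pi> (sobasis N \<alpha>) $$ (i,j) = (tau \<rho> \<pi> \<alpha> \<cdot>\<^sub>m sobasis N (phi \<pi> \<alpha>)) $$ (i,j)"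
    by (simp only: L M R)
qed auto

lemma hvec_carrier:
  assumes d: "is_dual_basis N w" and l: "lab (h div 2) \<in> soidx N"
  shows "hvec N w lab h \<in> carrier_mat N N"
  using d l by (auto simp: hvec_def is_dual_basis_def soN_def)

lemma trm_hvec:
  fixes w :: "nat \<times> nat \<Rightarrow> 'k::field_char_0 mat"
  assumes g: "good N \<rho> \<pi>" and d: "is_dual_basis N w" and l: "lab (h div 2) \<in> soidx N"
  shows "trm N \<rho> \<pi> (hvec N w lab h) = tau \<rho> \<pi> (lab (h div 2)) \<cdot>\<^sub>m hvec N w (phi \<pi> \<circ> lab) h"
proof (cases "even h")
  case True thus ?thesis using trm_sobasis[OF g l] by (simp add: hvec_def)
next
  case False
  have l': "phi \<pi> (lab (h div 2)) \<in> soidx N" using phi_soidx[OF g l] .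
  have h1: "hvec N w lab h = (-1/2) \<cdot>\<^sub>m sobasis N (lab (h div 2))"
    using False by (simp add: hvec_def dual_w[OF d l])
  have h2: "hvec N w (phi \<pi> \<circ> lab) h = (-1/2) \<cdot>\<^sub>m sobasis N (phi \<pi> (lab (h div 2)))"
    using False by (simp add: hvec_def dual_w[OF d l'])
  show ?thesis unfolding h1 h2 trm_smult[OF sobasis_carrier g] trm_sobasis[OF g l] smult_smult_mat
    by (simp only: mult.commute)
qed

lemma strand_prod_Cons: "strand_prod N w lab (h # hs) = hvec N w lab h * strand_prod N w lab hs"
  by (simp add: strand_prod_def)

lemma strand_prod_Nil: "strand_prod N w lab [] = 1\<^sub>m N"
  by (simp add: strand_prod_def)

lemma strand_carrier:
  assumes d: "is_dual_basis N w" and l: "\<forall>h\<in>set hs. lab (h div 2) \<in> soidx N"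
  shows "strand_prod N w lab hs \<in> carrier_mat N N"
  using l by (induction hs) (auto simp: strand_prod_Cons strand_prod_Nil intro!: mult_carrier_mat hvec_carrier[OF d])

lemma smult_one_mat': "(1::'k::comm_ring_1) \<cdot>\<^sub>m A = A"
  by (intro eq_matI) auto

lemma smult_mult_smult:
  assumes "A \<in> carrier_mat n n" "B \<in> carrier_mat n n"
  shows "(a \<cdot>\<^sub>m A) * (b \<cdot>\<^sub>m B) = (a * b) \<cdot>\<^sub>m (A * (B :: 'k::comm_ring mat))"
  using assms by (intro eq_matI) (auto simp: scalar_prod_def sum_distrib_left ac_simps intro!: sum.cong)

lemma trm_strand:
  fixes w :: "nat \<times> nat \<Rightarrow> 'k::field_char_0 mat"
  assumes g: "good N \<rho> \<pi>" and d: "is_dual_basis N w" and l: "\<forall>h\<in>set hs. lab (h div 2) \<in> soidx N"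
  shows "trm N \<rho> \<pi> (strand_prod N w lab hs) =
     (\<Prod>h\<leftarrow>hs. tau \<rho> \<pi> (lab (h div 2))) \<cdot>\<^sub>m strand_prod N w (phi \<pi> \<circ> lab) hs"
  using l
proof (induction hs)
  case Nil thus ?case using g by (simp add: strand_prod_Nil trm_one smult_one_mat')
next
  case (Cons h hs)
  have l: "lab (h div 2) \<in> soidx N" and ls: "\<forall>h\<in>set hs. lab (h div 2) \<in> soidx N" using Cons.prems by auto
  have ls': "\<forall>h\<in>set hs. (phi \<pi> \<circ> lab) (h div 2) \<in> soidx N" using ls phi_soidx[OF g] by auto
  have l': "(phi \<pi> \<circ> lab) (h div 2) \<in> soidx N" using l phi_soidx[OF g] by auto
  have c1: "hvec N w lab h \<in> carrier_mat N N" using hvec_carrier[OF d, of lab h] l by simp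
  have c2: "strand_prod N w lab hs \<in> carrier_mat N N" by (rule strand_carrier[OF d ls])
  have c1': "hvec N w (phi \<pi> \<circ> lab) h \<in> carrier_mat N N" using hvec_carrier[OF d, of "phi \<pi> \<circ> lab" h] l' by simp
  have c2': "strand_prod N w (phi \<pi> \<circ> lab) hs \<in> carrier_mat N N" by (rule strand_carrier[OF d ls'])
  show ?case
    unfolding strand_prod_Cons trm_mult[OF g c1 c2] Cons.IH[OF ls] trm_hvec[OF g d, of lab h, OF l]
    using smult_mult_smult[OF c1' c2'] by simp
qed



definition vprod :: "nat \<Rightarrow> (nat \<times> nat \<Rightarrow> 'k::field mat) \<Rightarrow> (nat \<Rightarrow> nat \<times> nat) \<Rightarrow> (nat \<times> nat \<times> nat) list \<Rightarrow> 'k" where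
  "vprod N w lab tri = prod_list (map (\<lambda>(a, b, c). vertex_val (hvec N w lab a) (hvec N w lab b) (hvec N w lab c)) tri)"

definition summ :: "nat \<Rightarrow> (nat \<times> nat \<Rightarrow> 'k::field mat) \<Rightarrow> jdiag \<Rightarrow> (nat \<Rightarrow> nat \<times> nat) \<Rightarrow> nat \<Rightarrow> nat \<Rightarrow> nat \<Rightarrow> nat \<Rightarrow> 'k" where
  "summ N w D lab i1 i2 j1 j2 = vprod N w lab (jd_tri D) * strand_prod N w lab (jd_str1 D) $$ (i1,j1)
      * strand_prod N w lab (jd_str2 D) $$ (i2,j2)"

lemma W_St_eq: "W_St N w D (i1,i2) (j1,j2) = (if (i1,i2) \<in> idx2 N \<and> (j1,j2) \<in> idx2 N
   then (\<Sum>lab \<in> {..<jd_edges D} \<rightarrow>\<^sub>E soidx N. summ N w D lab i1 i2 j1 j2) else 0)"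
  by (simp add: W_St_def summ_def vprod_def)

definition tri_hs :: "(nat \<times> nat \<times> nat) list \<Rightarrow> nat list" where
  "tri_hs tri = concat (map (\<lambda>(a, b, c). [a, b, c]) tri)"

definition hall :: "jdiag \<Rightarrow> nat list" where
  "hall D = tri_hs (jd_tri D) @ jd_str1 D @ jd_str2 D"

lemma tri_hs_Nil[simp]: "tri_hs [] = []" and tri_hs_Cons[simp]: "tri_hs ((a,b,c) # t) = a # b # c # tri_hs t"
  by (simp_all add: tri_hs_def)

lemma wf_mset: "wf_jdiag D \<Longrightarrow> mset (hall D) = mset [0..<2 * jd_edges D]"
  by (simp add: wf_jdiag_def hall_def tri_hs_def)

lemma wf_set: "wf_jdiag D \<Longrightarrow> set (hall D) = {..<2 * jd_edges D}"
proof -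
  assume "wf_jdiag D"
  hence "set_mset (mset (hall D)) = set_mset (mset [0..<2 * jd_edges D])" by (simp add: wf_mset)
  thus ?thesis by (simp add: atLeast0LessThan)
qed

lemma wf_lt: "wf_jdiag D \<Longrightarrow> h \<in> set (hall D) \<Longrightarrow> h div 2 < jd_edges D"
  using wf_set by fastforce

lemma hvec_cong: "lab (h div 2) = lab' (h div 2) \<Longrightarrow> hvec N w lab h = hvec N w lab' h"
  by (simp add: hvec_def)

lemma strand_cong: "\<forall>h\<in>set hs. lab (h div 2) = lab' (h div 2) \<Longrightarrow> strand_prod N w lab hs = strand_prod N w lab' hs"
  by (induction hs) (auto simp: strand_prod_Cons strand_prod_Nil hvec_def)

lemma vprod_cong: "\<forall>h\<in>set (tri_hs tri). lab (h div 2) = lab' (h div 2) \<Longrightarrow> vprod N w lab tri = vprod N w lab' tri"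
proof (induction tri)
  case Nil thus ?case by (simp add: vprod_def)
next
  case (Cons t tri)
  obtain a b c where t: "t = (a,b,c)" by (cases t) auto
  show ?case using Cons unfolding t by (simp add: vprod_def hvec_cong[of lab _ lab'])
qed

lemma summ_cong: "\<forall>h\<in>set (hall D). lab (h div 2) = lab' (h div 2) \<Longrightarrow> summ N w D lab i1 i2 j1 j2 = summ N w D lab' i1 i2 j1 j2"
  unfolding summ_def hall_def
  using vprod_cong[of "jd_tri D" lab lab' N w] strand_cong[of "jd_str1 D" lab lab' N w] strand_cong[of "jd_str2 D" lab lab' N w]
  by simp

lemma trm_vprod:
  fixes w :: "nat \<times> nat \<Rightarrow> 'k::field_char_0 mat"
  assumes g: "good N \<rho> \<pi>" and d: "is_dual_basis N w"
  shows "\<forall>h\<in>set (tri_hs tri). lab (h div 2) \<in> soidx N \<Longrightarrow>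
    vprod N w lab tri = (\<Prod>h\<leftarrow>tri_hs tri. tau \<rho> \<pi> (lab (h div 2))) * vprod N w (phi \<pi> \<circ> lab) tri"
proof (induction tri)
  case Nil thus ?case by (simp add: vprod_def)
next
  case (Cons t tri)
  obtain a b c where t: "t = (a,b,c)" by (cases t) auto
  have l: "lab (a div 2) \<in> soidx N" "lab (b div 2) \<in> soidx N" "lab (c div 2) \<in> soidx N"
    and ls: "\<forall>h\<in>set (tri_hs tri). lab (h div 2) \<in> soidx N" using Cons.prems t by auto
  have ca: "hvec N w lab a \<in> carrier_mat N N" using hvec_carrier[OF d, of lab a] l by simp
  have cb: "hvec N w lab b \<in> carrier_mat N N" using hvec_carrier[OF d, of lab b] l by simp
  have cc: "hvec N w lab c \<in> carrier_mat N N" using hvec_carrier[OF d, of lab c] l by simp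
  have l': "(phi \<pi> \<circ> lab) (a div 2) \<in> soidx N" "(phi \<pi> \<circ> lab) (b div 2) \<in> soidx N" "(phi \<pi> \<circ> lab) (c div 2) \<in> soidx N"
    using l phi_soidx[OF g] by auto
  have ca': "hvec N w (phi \<pi> \<circ> lab) a \<in> carrier_mat N N" using hvec_carrier[OF d, of _ a] l' by simp
  have cb': "hvec N w (phi \<pi> \<circ> lab) b \<in> carrier_mat N N" using hvec_carrier[OF d, of _ b] l' by simp
  have cc': "hvec N w (phi \<pi> \<circ> lab) c \<in> carrier_mat N N" using hvec_carrier[OF d, of _ c] l' by simp
  have "vertex_val (hvec N w lab a) (hvec N w lab b) (hvec N w lab c)
     = vertex_val (trm N \<rho> \<pi> (hvec N w lab a)) (trm N \<rho> \<pi> (hvec N w lab b)) (trm N \<rho> \<pi> (hvec N w lab c))"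
    using vertex_val_trm[OF g ca cb cc] by simp
  also have "\<dots> = tau \<rho> \<pi> (lab (a div 2)) * tau \<rho> \<pi> (lab (b div 2)) * tau \<rho> \<pi> (lab (c div 2)) *
      vertex_val (hvec N w (phi \<pi> \<circ> lab) a) (hvec N w (phi \<pi> \<circ> lab) b) (hvec N w (phi \<pi> \<circ> lab) c)"
    unfolding trm_hvec[OF g d, of lab a, OF l(1)] trm_hvec[OF g d, of lab b, OF l(2)] trm_hvec[OF g d, of lab c, OF l(3)]
    by (rule vertex_val_smult[OF ca' cb' cc'])
  finally have v: "vertex_val (hvec N w lab a) (hvec N w lab b) (hvec N w lab c) = \<dots>" .
  have e1: "\<And>L. vprod N w L (t # tri) = vertex_val (hvec N w L a) (hvec N w L b) (hvec N w L c) * vprod N w L tri"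
    by (simp add: vprod_def t)
  have e3: "(\<Prod>h\<leftarrow>tri_hs (t # tri). tau \<rho> \<pi> (lab (h div 2))) = tau \<rho> \<pi> (lab (a div 2)) * (tau \<rho> \<pi> (lab (b div 2)) *
     (tau \<rho> \<pi> (lab (c div 2)) * (\<Prod>h\<leftarrow>tri_hs tri. tau \<rho> \<pi> (lab (h div 2)))))"
    by (simp add: t)
  show ?case unfolding e1 e3 v Cons.IH[OF ls] by (simp only: ac_simps)
qed

lemma prod_upt_double:
  assumes "\<And>e. t e * t e = (1::'k::comm_ring_1)"
  shows "(\<Prod>h\<leftarrow>[0..<2 * E]. t (h div 2)) = 1"
proof (induction E)
  case 0 thus ?case by simp
next
  case (Suc E)
  have "2 * Suc E = Suc (Suc (2 * E))" by simp
  hence "[0..<2 * Suc E] = [0..<2 * E] @ [2 * E, 2 * E + 1]" by (simp only: upt_Suc_append) simp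
  hence "(\<Prod>h\<leftarrow>[0..<2 * Suc E]. t (h div 2)) = (\<Prod>h\<leftarrow>[0..<2 * E]. t (h div 2)) * (t E * t E)"
    by (simp add: ac_simps)
  thus ?case using Suc assms by simp
qed

lemma sign_total:
  assumes wf: "wf_jdiag D" and t: "\<And>e. t e * t e = (1::'k::comm_ring_1)"
  shows "(\<Prod>h\<leftarrow>hall D. t (h div 2)) = 1"
proof -
  have "(\<Prod>h\<leftarrow>hall D. t (h div 2)) = prod_mset (image_mset (\<lambda>h. t (h div 2)) (mset (hall D)))"
    by (simp add: prod_mset_prod_list[symmetric])
  also have "\<dots> = prod_mset (image_mset (\<lambda>h. t (h div 2)) (mset [0..<2 * jd_edges D]))"
    using wf_mset[OF wf] by simp
  also have "\<dots> = (\<Prod>h\<leftarrow>[0..<2 * jd_edges D]. t (h div 2))"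
    by (simp only: prod_mset_prod_list[symmetric] mset_map)
  also have "\<dots> = 1" by (rule prod_upt_double[OF t])
  finally show ?thesis .
qed



lemma hall_lab:
  assumes wf: "wf_jdiag D" and lab: "lab \<in> {..<jd_edges D} \<rightarrow>\<^sub>E soidx N"
  shows "\<forall>h\<in>set (hall D). lab (h div 2) \<in> soidx N"
  using wf_lt[OF wf] lab by auto

lemma summ_trans:
  fixes w :: "nat \<times> nat \<Rightarrow> 'k::field_char_0 mat"
  assumes g: "good N \<rho> \<pi>" and d: "is_dual_basis N w" and wf: "wf_jdiag D"
    and lab: "lab \<in> {..<jd_edges D} \<rightarrow>\<^sub>E soidx N"
    and ij: "i1 < N" "i2 < N" "j1 < N" "j2 < N"
  shows "\<rho> i1 * \<rho> i2 * \<rho> j1 * \<rho> j2 * summ N w D lab (\<pi> i1) (\<pi> i2) (\<pi> j1) (\<pi> j2)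
       = summ N w D (phi \<pi> \<circ> lab) i1 i2 j1 j2"
proof -
  have L: "\<forall>h\<in>set (hall D). lab (h div 2) \<in> soidx N" by (rule hall_lab[OF wf lab])
  hence L1: "\<forall>h\<in>set (tri_hs (jd_tri D)). lab (h div 2) \<in> soidx N"
    and L2: "\<forall>h\<in>set (jd_str1 D). lab (h div 2) \<in> soidx N"
    and L3: "\<forall>h\<in>set (jd_str2 D). lab (h div 2) \<in> soidx N" by (auto simp: hall_def)
  have L2': "\<forall>h\<in>set (jd_str1 D). (phi \<pi> \<circ> lab) (h div 2) \<in> soidx N" using L2 phi_soidx[OF g] by auto
  have L3': "\<forall>h\<in>set (jd_str2 D). (phi \<pi> \<circ> lab) (h div 2) \<in> soidx N" using L3 phi_soidx[OF g] by auto
  let ?t = "\<lambda>h. tau \<rho> \<pi> (lab (h div 2))"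
  define T where "T = (\<Prod>h\<leftarrow>tri_hs (jd_tri D). ?t h)"
  define P1 where "P1 = (\<Prod>h\<leftarrow>jd_str1 D. ?t h)"
  define P2 where "P2 = (\<Prod>h\<leftarrow>jd_str2 D. ?t h)"
  have tot: "T * P1 * P2 = 1"
  proof -
    have "T * P1 * P2 = (\<Prod>h\<leftarrow>hall D. tau \<rho> \<pi> (lab (h div 2)))"
      by (simp add: T_def P1_def P2_def hall_def ac_simps)
    also have "\<dots> = 1" using sign_total[OF wf, of "\<lambda>e. tau \<rho> \<pi> (lab e)"] tau_sq[OF g] by simp
    finally show ?thesis .
  qed
  have V: "vprod N w lab (jd_tri D) = T * vprod N w (phi \<pi> \<circ> lab) (jd_tri D)"
    unfolding T_def by (rule trm_vprod[OF g d L1])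
  have S: "\<rho> i * \<rho> j * strand_prod N w lab hs $$ (\<pi> i, \<pi> j) = (\<Prod>h\<leftarrow>hs. ?t h) * strand_prod N w (phi \<pi> \<circ> lab) hs $$ (i, j)"
    if "\<forall>h\<in>set hs. lab (h div 2) \<in> soidx N" "\<forall>h\<in>set hs. (phi \<pi> \<circ> lab) (h div 2) \<in> soidx N" "i < N" "j < N" for hs i j
  proof -
    have "\<rho> i * \<rho> j * strand_prod N w lab hs $$ (\<pi> i, \<pi> j) = trm N \<rho> \<pi> (strand_prod N w lab hs) $$ (i,j)"
      using that by (simp add: trm_entry)
    also have "\<dots> = ((\<Prod>h\<leftarrow>hs. ?t h) \<cdot>\<^sub>m strand_prod N w (phi \<pi> \<circ> lab) hs) $$ (i,j)"
      by (simp only: trm_strand[OF g d that(1)])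
    also have "\<dots> = (\<Prod>h\<leftarrow>hs. ?t h) * strand_prod N w (phi \<pi> \<circ> lab) hs $$ (i, j)"
    proof -
      have c: "strand_prod N w (phi \<pi> \<circ> lab) hs \<in> carrier_mat N N" by (rule strand_carrier[OF d that(2)])
      hence dims: "dim_row (strand_prod N w (phi \<pi> \<circ> lab) hs) = N" "dim_col (strand_prod N w (phi \<pi> \<circ> lab) hs) = N"
        by (simp_all only: carrier_matD)
      show ?thesis by (rule index_smult_mat(1)) (simp_all only: dims that)
    qed
    finally show ?thesis .
  qed
  have S1: "\<rho> i1 * \<rho> j1 * strand_prod N w lab (jd_str1 D) $$ (\<pi> i1, \<pi> j1) = P1 * strand_prod N w (phi \<pi> \<circ> lab) (jd_str1 D) $$ (i1, j1)"
    unfolding P1_def using S[OF L2 L2' ij(1) ij(3)] .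
  have S2: "\<rho> i2 * \<rho> j2 * strand_prod N w lab (jd_str2 D) $$ (\<pi> i2, \<pi> j2) = P2 * strand_prod N w (phi \<pi> \<circ> lab) (jd_str2 D) $$ (i2, j2)"
    unfolding P2_def using S[OF L3 L3' ij(2) ij(4)] .
  have "\<rho> i1 * \<rho> i2 * \<rho> j1 * \<rho> j2 * summ N w D lab (\<pi> i1) (\<pi> i2) (\<pi> j1) (\<pi> j2)
     = vprod N w lab (jd_tri D) * (\<rho> i1 * \<rho> j1 * strand_prod N w lab (jd_str1 D) $$ (\<pi> i1, \<pi> j1))
        * (\<rho> i2 * \<rho> j2 * strand_prod N w lab (jd_str2 D) $$ (\<pi> i2, \<pi> j2))"
    unfolding summ_def by (simp only: ac_simps)
  also have "\<dots> = (T * P1 * P2) * (vprod N w (phi \<pi> \<circ> lab) (jd_tri D) * strand_prod N w (phi \<pi> \<circ> lab) (jd_str1 D) $$ (i1, j1)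
        * strand_prod N w (phi \<pi> \<circ> lab) (jd_str2 D) $$ (i2, j2))"
    unfolding S1 S2 V by (simp only: ac_simps)
  also have "\<dots> = summ N w D (phi \<pi> \<circ> lab) i1 i2 j1 j2" unfolding tot summ_def by simp
  finally show ?thesis .
qed

lemma sum_phi_reindex:
  fixes w :: "nat \<times> nat \<Rightarrow> 'k::field_char_0 mat"
  assumes g: "good N \<rho> \<pi>" and wf: "wf_jdiag D"
  shows "(\<Sum>lab \<in> {..<jd_edges D} \<rightarrow>\<^sub>E soidx N. summ N w D (phi \<pi> \<circ> lab) i1 i2 j1 j2)
       = (\<Sum>lab \<in> {..<jd_edges D} \<rightarrow>\<^sub>E soidx N. summ N w D lab i1 i2 j1 j2)"
proof (rule sum.reindex_bij_witness[where i="\<lambda>l. restrict (phi \<pi> \<circ> l) {..<jd_edges D}"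
      and j="\<lambda>l. restrict (phi \<pi> \<circ> l) {..<jd_edges D}"])
  fix a assume a: "a \<in> {..<jd_edges D} \<rightarrow>\<^sub>E soidx N"
  show "restrict (phi \<pi> \<circ> restrict (phi \<pi> \<circ> a) {..<jd_edges D}) {..<jd_edges D} = a"
  proof
    fix x show "restrict (phi \<pi> \<circ> restrict (phi \<pi> \<circ> a) {..<jd_edges D}) {..<jd_edges D} x = a x"
    proof (cases "x < jd_edges D")
      case True
      hence "a x \<in> soidx N" using a by auto
      thus ?thesis using True phi_phi[OF g, of "a x"] by simp
    next
      case False thus ?thesis using a by (auto simp: PiE_def extensional_def)
    qed
  qed
  thus "restrict (phi \<pi> \<circ> restrict (phi \<pi> \<circ> a) {..<jd_edges D}) {..<jd_edges D} = a" .
  show "restrict (phi \<pi> \<circ> a) {..<jd_edges D} \<in> {..<jd_edges D} \<rightarrow>\<^sub>E soidx N"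
  proof -
    have "\<forall>x<jd_edges D. a x \<in> soidx N" using a by (auto simp: PiE_iff)
    thus ?thesis using phi_soidx[OF g] by (auto simp: PiE_iff simp del: split_paired_all)
  qed
  thus "restrict (phi \<pi> \<circ> a) {..<jd_edges D} \<in> {..<jd_edges D} \<rightarrow>\<^sub>E soidx N" .
  show "summ N w D (restrict (phi \<pi> \<circ> a) {..<jd_edges D}) i1 i2 j1 j2 = summ N w D (phi \<pi> \<circ> a) i1 i2 j1 j2"
    by (rule summ_cong) (use wf_lt[OF wf] in auto)
qed

lemma W_trans:
  fixes w :: "nat \<times> nat \<Rightarrow> 'k::field_char_0 mat"
  assumes g: "good N \<rho> \<pi>" and d: "is_dual_basis N w" and wf: "wf_jdiag D"
    and ij: "i1 < N" "i2 < N" "j1 < N" "j2 < N"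
  shows "\<rho> i1 * \<rho> i2 * \<rho> j1 * \<rho> j2 * W_St N w D (\<pi> i1, \<pi> i2) (\<pi> j1, \<pi> j2) = W_St N w D (i1, i2) (j1, j2)"
proof -
  have pij: "\<pi> i1 < N" "\<pi> i2 < N" "\<pi> j1 < N" "\<pi> j2 < N" using g ij by (auto simp: good_def)
  have "\<rho> i1 * \<rho> i2 * \<rho> j1 * \<rho> j2 * W_St N w D (\<pi> i1, \<pi> i2) (\<pi> j1, \<pi> j2)
     = (\<Sum>lab \<in> {..<jd_edges D} \<rightarrow>\<^sub>E soidx N. \<rho> i1 * \<rho> i2 * \<rho> j1 * \<rho> j2 * summ N w D lab (\<pi> i1) (\<pi> i2) (\<pi> j1) (\<pi> j2))"
    using pij by (simp add: W_St_eq idx2_def sum_distrib_left)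
  also have "\<dots> = (\<Sum>lab \<in> {..<jd_edges D} \<rightarrow>\<^sub>E soidx N. summ N w D (phi \<pi> \<circ> lab) i1 i2 j1 j2)"
    by (rule sum.cong[OF refl]) (rule summ_trans[OF g d wf _ ij])
  also have "\<dots> = (\<Sum>lab \<in> {..<jd_edges D} \<rightarrow>\<^sub>E soidx N. summ N w D lab i1 i2 j1 j2)"
    by (rule sum_phi_reindex[OF g wf])
  also have "\<dots> = W_St N w D (i1, i2) (j1, j2)"
    using ij by (simp add: W_St_eq idx2_def)
  finally show ?thesis .
qed



definition flipr :: "nat \<Rightarrow> nat \<Rightarrow> 'k::field" where
  "flipr k i = (if i = k then -1 else 1)"

definition swp :: "nat \<Rightarrow> nat \<Rightarrow> nat \<Rightarrow> nat" where
  "swp u v i = (if i = u then v else if i = v then u else i)"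

lemma good_flip: "good N (flipr k :: nat \<Rightarrow> 'k::field) id"
  by (simp add: good_def flipr_def)

lemma good_swp: "u < N \<Longrightarrow> v < N \<Longrightarrow> good N (\<lambda>_. 1 :: 'k::field) (swp u v)"
  by (simp add: good_def swp_def)

lemma neg_self_zero: "- x = x \<Longrightarrow> (x :: 'k::field_char_0) = 0"
proof -
  assume "- x = x"
  hence "x + x = 0" by (metis add.right_inverse)
  hence "2 * x = 0" by (simp only: mult_2)
  thus "x = 0" by simp
qed

lemma W_zero:
  fixes w :: "nat \<times> nat \<Rightarrow> 'k::field_char_0 mat"
  assumes d: "is_dual_basis N w" and wf: "wf_jdiag D"
    and ij: "i1 < N" "i2 < N" "j1 < N" "j2 < N"
    and u: "i1 \<notin> {i2, j1, j2} \<or> i2 \<notin> {i1, j1, j2} \<or> j1 \<notin> {i1, i2, j2} \<or> j2 \<notin> {i1, i2, j1}"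
  shows "W_St N w D (i1, i2) (j1, j2) = 0"
proof -
  have key: "W_St N w D (i1, i2) (j1, j2) = 0"
    if "flipr k i1 * flipr k i2 * flipr k j1 * flipr k j2 = (-1 :: 'k)" for k
  proof -
    have "flipr k i1 * flipr k i2 * flipr k j1 * flipr k j2 * W_St N w D (id i1, id i2) (id j1, id j2) = W_St N w D (i1, i2) (j1, j2)"
      by (rule W_trans[OF good_flip d wf ij])
    hence "- W_St N w D (i1, i2) (j1, j2) = W_St N w D (i1, i2) (j1, j2)" using that by simp
    thus ?thesis by (rule neg_self_zero)
  qed
  from u show ?thesis
  proof (elim disjE)
    assume "i1 \<notin> {i2, j1, j2}" thus ?thesis using key[of i1] by (simp add: flipr_def)
  next
    assume "i2 \<notin> {i1, j1, j2}" thus ?thesis using key[of i2] by (simp add: flipr_def)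
  next
    assume "j1 \<notin> {i1, i2, j2}" thus ?thesis using key[of j1] by (simp add: flipr_def)
  next
    assume "j2 \<notin> {i1, i2, j1}" thus ?thesis using key[of j2] by (simp add: flipr_def)
  qed
qed

lemma W_swap:
  fixes w :: "nat \<times> nat \<Rightarrow> 'k::field_char_0 mat"
  assumes d: "is_dual_basis N w" and wf: "wf_jdiag D"
    and ij: "i1 < N" "i2 < N" "j1 < N" "j2 < N" and uv: "u < N" "v < N"
  shows "W_St N w D (swp u v i1, swp u v i2) (swp u v j1, swp u v j2) = W_St N w D (i1, i2) (j1, j2)"
  using W_trans[OF good_swp[OF uv] d wf ij] by simp

lemma W_sym:
  fixes w :: "nat \<times> nat \<Rightarrow> 'k::field_char_0 mat"
  assumes d: "is_dual_basis N w" and wf: "wf_jdiag D"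
  shows "W_St N w D p q = W_St N w D q p"
proof -
  obtain i1 i2 where p: "p = (i1, i2)" by (cases p)
  obtain j1 j2 where q: "q = (j1, j2)" by (cases q)
  show ?thesis
  proof (cases "i1 < N \<and> i2 < N \<and> j1 < N \<and> j2 < N")
    case False thus ?thesis unfolding p q by (auto simp: W_St_eq idx2_def)
  next
    case True
    hence ij: "i1 < N" "i2 < N" "j1 < N" "j2 < N" by auto
    show ?thesis
    proof (cases "i1 \<notin> {i2, j1, j2} \<or> i2 \<notin> {i1, j1, j2} \<or> j1 \<notin> {i1, i2, j2} \<or> j2 \<notin> {i1, i2, j1}")
      case True
      have "W_St N w D (i1, i2) (j1, j2) = 0" by (rule W_zero[OF d wf ij True])
      moreover have "W_St N w D (j1, j2) (i1, i2) = 0"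
        by (rule W_zero[OF d wf ij(3,4,1,2)]) (use True in blast)
      ultimately show ?thesis unfolding p q by simp
    next
      case False
      hence "(i1 = j1 \<and> i2 = j2) \<or> (i1 = j2 \<and> i2 = j1) \<or> (i1 = i2 \<and> j1 = j2)" by blast
      thus ?thesis
      proof (elim disjE)
        assume "i1 = j1 \<and> i2 = j2" thus ?thesis unfolding p q by simp
      next
        assume e: "i1 = j2 \<and> i2 = j1"
        have "W_St N w D (swp i1 i2 i1, swp i1 i2 i2) (swp i1 i2 j1, swp i1 i2 j2) = W_St N w D (i1, i2) (j1, j2)"
          by (rule W_swap[OF d wf ij ij(1,2)])
        thus ?thesis unfolding p q using e by (cases "i1 = i2"; cases "j1 = j2"; cases "i1 = j1") (auto simp: swp_def)
      next
        assume e: "i1 = i2 \<and> j1 = j2"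
        have "W_St N w D (swp i1 j1 i1, swp i1 j1 i2) (swp i1 j1 j1, swp i1 j1 j2) = W_St N w D (i1, i2) (j1, j2)"
          by (rule W_swap[OF d wf ij ij(1,3)])
        thus ?thesis unfolding p q using e by (cases "i1 = i2"; cases "j1 = j2"; cases "i1 = j1") (auto simp: swp_def)
      qed
    qed
  qed
qed



definition stack :: "jdiag \<Rightarrow> jdiag \<Rightarrow> jdiag" where
  "stack D1 D2 = \<lparr>jd_edges = jd_edges D1 + jd_edges D2,
     jd_tri = jd_tri D1 @ map (\<lambda>(a, b, c). (a + 2 * jd_edges D1, b + 2 * jd_edges D1, c + 2 * jd_edges D1)) (jd_tri D2),
     jd_str1 = jd_str1 D1 @ map (\<lambda>h. h + 2 * jd_edges D1) (jd_str1 D2),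
     jd_str2 = jd_str2 D1 @ map (\<lambda>h. h + 2 * jd_edges D1) (jd_str2 D2)\<rparr>"

lemma tri_hs_append: "tri_hs (xs @ ys) = tri_hs xs @ tri_hs ys"
  by (simp add: tri_hs_def)

lemma tri_hs_map: "tri_hs (map (\<lambda>(a, b, c). (a + m, b + m, c + m)) tri) = map (\<lambda>h. h + m) (tri_hs tri)"
  by (induction tri) auto

lemma wf_stack:
  assumes w1: "wf_jdiag D1" and w2: "wf_jdiag D2"
  shows "wf_jdiag (stack D1 D2)"
proof -
  let ?m = "2 * jd_edges D1"
  have "mset (hall (stack D1 D2)) = mset (hall D1) + image_mset (\<lambda>h. h + ?m) (mset (hall D2))"
    by (simp add: hall_def stack_def tri_hs_append tri_hs_map ac_simps)
  also have "\<dots> = mset [0..<?m] + mset (map (\<lambda>h. h + ?m) [0..<2 * jd_edges D2])"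
    using wf_mset[OF w1] wf_mset[OF w2] by simp
  also have "\<dots> = mset ([0..<?m] @ [?m..<2 * jd_edges D2 + ?m])"
    by (simp only: map_add_upt mset_append)
  also have "[0..<?m] @ [?m..<2 * jd_edges D2 + ?m] = [0..<2 * jd_edges (stack D1 D2)]"
    using upt_add_eq_append[of 0 ?m "2 * jd_edges D2"] by (simp add: stack_def algebra_simps)
  finally show ?thesis by (simp add: wf_jdiag_def hall_def tri_hs_def)
qed

definition merge :: "nat \<Rightarrow> nat \<Rightarrow> (nat \<Rightarrow> nat \<times> nat) \<Rightarrow> (nat \<Rightarrow> nat \<times> nat) \<Rightarrow> nat \<Rightarrow> nat \<times> nat" where
  "merge E1 E2 l1 l2 = restrict (\<lambda>e. if e < E1 then l1 e else l2 (e - E1)) {..<E1 + E2}"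

lemma sum_PiE_split:
  "(\<Sum>l \<in> {..<E1 + E2} \<rightarrow>\<^sub>E S. f l) =
   (\<Sum>l1 \<in> {..<E1} \<rightarrow>\<^sub>E S. \<Sum>l2 \<in> {..<E2} \<rightarrow>\<^sub>E S. f (merge E1 E2 l1 l2))"
proof -
  have "(\<Sum>l1 \<in> {..<E1} \<rightarrow>\<^sub>E S. \<Sum>l2 \<in> {..<E2} \<rightarrow>\<^sub>E S. f (merge E1 E2 l1 l2)) =
        (\<Sum>(l1,l2) \<in> ({..<E1} \<rightarrow>\<^sub>E S) \<times> ({..<E2} \<rightarrow>\<^sub>E S). f (merge E1 E2 l1 l2))"
    by (rule sum.cartesian_product)
  also have "\<dots> = (\<Sum>l \<in> {..<E1 + E2} \<rightarrow>\<^sub>E S. f l)"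
  proof -
    have F1: "restrict (merge E1 E2 l1 l2) {..<E1} = l1 \<and> restrict (\<lambda>e. merge E1 E2 l1 l2 (e + E1)) {..<E2} = l2"
      if l1: "l1 \<in> {..<E1} \<rightarrow>\<^sub>E S" and l2: "l2 \<in> {..<E2} \<rightarrow>\<^sub>E S" for l1 l2
    proof
      show "restrict (merge E1 E2 l1 l2) {..<E1} = l1"
      proof
        fix x show "restrict (merge E1 E2 l1 l2) {..<E1} x = l1 x"
          using l1 by (cases "x < E1") (auto simp: merge_def PiE_def extensional_def)
      qed
      show "restrict (\<lambda>e. merge E1 E2 l1 l2 (e + E1)) {..<E2} = l2"
      proof
        fix x show "restrict (\<lambda>e. merge E1 E2 l1 l2 (e + E1)) {..<E2} x = l2 x"
          using l2 by (cases "x < E2") (auto simp: merge_def PiE_def extensional_def)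
      qed
    qed
    have F2: "merge E1 E2 l1 l2 \<in> {..<E1 + E2} \<rightarrow>\<^sub>E S"
      if l1: "l1 \<in> {..<E1} \<rightarrow>\<^sub>E S" and l2: "l2 \<in> {..<E2} \<rightarrow>\<^sub>E S" for l1 l2
      using l1 l2 by (auto simp: merge_def PiE_iff)
    have F3: "merge E1 E2 (restrict l {..<E1}) (restrict (\<lambda>e. l (e + E1)) {..<E2}) = l"
      if l: "l \<in> {..<E1 + E2} \<rightarrow>\<^sub>E S" for l
    proof
      fix x show "merge E1 E2 (restrict l {..<E1}) (restrict (\<lambda>e. l (e + E1)) {..<E2}) x = l x"
        using l by (cases "x < E1"; cases "x < E1 + E2") (auto simp: merge_def PiE_def extensional_def)
    qed
    have F4: "restrict l {..<E1} \<in> {..<E1} \<rightarrow>\<^sub>E S \<and> restrict (\<lambda>e. l (e + E1)) {..<E2} \<in> {..<E2} \<rightarrow>\<^sub>E S"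
      if l: "l \<in> {..<E1 + E2} \<rightarrow>\<^sub>E S" for l
      using l by (auto simp: PiE_iff)
    show ?thesis
      apply (rule sum.reindex_bij_witness[where i="\<lambda>l. (restrict l {..<E1}, restrict (\<lambda>e. l (e + E1)) {..<E2})"
        and j="\<lambda>(l1,l2). merge E1 E2 l1 l2"])
      subgoal for a by (cases a) (simp add: F1)
      subgoal for a by (cases a) (simp add: F2)
      subgoal for b by (simp add: F3)
      subgoal for b using F4[of b] by blast
      subgoal for a by (cases a) simp
      done
  qed
  finally show ?thesis by simp
qed



lemma foldr_gen:
  assumes d: "is_dual_basis N w" and l: "\<forall>h\<in>set xs. lab (h div 2) \<in> soidx N" and M0: "M0 \<in> carrier_mat N N"
  shows "foldr (\<lambda>h M. hvec N w lab h * M) xs M0 = strand_prod N w lab xs * M0"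
  using l
proof (induction xs)
  case Nil thus ?case using M0 by (simp add: strand_prod_Nil)
next
  case (Cons h xs)
  have lh: "lab (h div 2) \<in> soidx N" and ls: "\<forall>h\<in>set xs. lab (h div 2) \<in> soidx N" using Cons.prems by auto
  have c1: "hvec N w lab h \<in> carrier_mat N N" using hvec_carrier[OF d, of lab h] lh by simp
  have c2: "strand_prod N w lab xs \<in> carrier_mat N N" by (rule strand_carrier[OF d ls])
  have "foldr (\<lambda>h M. hvec N w lab h * M) (h # xs) M0 = hvec N w lab h * (strand_prod N w lab xs * M0)"
    using Cons.IH[OF ls] by simp
  also have "\<dots> = hvec N w lab h * strand_prod N w lab xs * M0"
    by (rule assoc_mult_mat[OF c1 c2 M0, symmetric])
  also have "\<dots> = strand_prod N w lab (h # xs) * M0" by (simp only: strand_prod_Cons)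
  finally show ?case .
qed

lemma strand_append:
  assumes d: "is_dual_basis N w" and l1: "\<forall>h\<in>set xs. lab (h div 2) \<in> soidx N"
    and l2: "\<forall>h\<in>set ys. lab (h div 2) \<in> soidx N"
  shows "strand_prod N w lab (xs @ ys) = strand_prod N w lab xs * strand_prod N w lab ys"
proof -
  have "strand_prod N w lab (xs @ ys) = foldr (\<lambda>h M. hvec N w lab h * M) xs (strand_prod N w lab ys)"
    by (simp add: strand_prod_def)
  also have "\<dots> = strand_prod N w lab xs * strand_prod N w lab ys"
    by (rule foldr_gen[OF d l1 strand_carrier[OF d l2]])
  finally show ?thesis .
qed

lemma strand_map:
  "\<forall>h\<in>set hs. hvec N w lab (f h) = hvec N w lab' h \<Longrightarrow> strand_prod N w lab (map f hs) = strand_prod N w lab' hs"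
  by (induction hs) (simp_all add: strand_prod_Cons strand_prod_Nil)

lemma vprod_append: "vprod N w lab (xs @ ys) = vprod N w lab xs * vprod N w lab ys"
  by (simp add: vprod_def)

lemma vprod_map:
  "\<forall>h\<in>set (tri_hs tri). hvec N w lab (h + m) = hvec N w lab' h \<Longrightarrow>
   vprod N w lab (map (\<lambda>(a, b, c). (a + m, b + m, c + m)) tri) = vprod N w lab' tri"
proof (induction tri)
  case Nil thus ?case by (simp add: vprod_def)
next
  case (Cons t tri)
  obtain a b c where t: "t = (a,b,c)" by (cases t) auto
  show ?case using Cons unfolding t by (simp add: vprod_def)
qed

lemma hvec_merge1: "h div 2 < E1 \<Longrightarrow> hvec N w (merge E1 E2 l1 l2) h = hvec N w l1 h"
  by (simp add: hvec_def merge_def)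

lemma hvec_merge2: "h div 2 < E2 \<Longrightarrow> hvec N w (merge E1 E2 l1 l2) (h + 2 * E1) = hvec N w l2 h"
proof -
  assume h: "h div 2 < E2"
  have e: "(h + 2 * E1) div 2 = h div 2 + E1" by simp
  have "even (h + 2 * E1) = even h" by simp
  thus ?thesis using h unfolding hvec_def merge_def e by simp
qed

lemma mult_entry:
  assumes "A \<in> carrier_mat N N" "B \<in> carrier_mat N N" "i < N" "j < N"
  shows "(A * B) $$ (i,j) = (\<Sum>k<N. A $$ (i,k) * B $$ (k,j))"
  using assms by (simp add: scalar_prod_def atLeast0LessThan)



lemma merge_val1: "e < E1 \<Longrightarrow> merge E1 E2 l1 l2 e = l1 e"
  by (simp add: merge_def)

lemma merge_val2: "e < E2 \<Longrightarrow> merge E1 E2 l1 l2 (e + E1) = l2 e"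
  by (simp add: merge_def)

lemma summ_stack:
  fixes w :: "nat \<times> nat \<Rightarrow> 'k::field_char_0 mat"
  assumes d: "is_dual_basis N w" and w1: "wf_jdiag D1" and w2: "wf_jdiag D2"
    and l1: "l1 \<in> {..<jd_edges D1} \<rightarrow>\<^sub>E soidx N" and l2: "l2 \<in> {..<jd_edges D2} \<rightarrow>\<^sub>E soidx N"
  shows "summ N w (stack D1 D2) (merge (jd_edges D1) (jd_edges D2) l1 l2) i1 i2 j1 j2 =
    vprod N w l1 (jd_tri D1) * vprod N w l2 (jd_tri D2)
    * (strand_prod N w l1 (jd_str1 D1) * strand_prod N w l2 (jd_str1 D2)) $$ (i1,j1)
    * (strand_prod N w l1 (jd_str2 D1) * strand_prod N w l2 (jd_str2 D2)) $$ (i2,j2)"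
proof -
  define E1 where "E1 = jd_edges D1"
  define E2 where "E2 = jd_edges D2"
  define M where "M = merge E1 E2 l1 l2"
  have H1: "h div 2 < E1" if "h \<in> set (hall D1)" for h using wf_lt[OF w1 that] by (simp add: E1_def)
  have H2: "h div 2 < E2" if "h \<in> set (hall D2)" for h using wf_lt[OF w2 that] by (simp add: E2_def)
  have m1: "M (h div 2) = l1 (h div 2)" if "h \<in> set (hall D1)" for h
    unfolding M_def by (rule merge_val1[OF H1[OF that]])
  have m2a: "M (h div 2 + E1) = l2 (h div 2)" if "h \<in> set (hall D2)" for h
    unfolding M_def by (rule merge_val2[OF H2[OF that]])
  have e2: "(h + 2 * E1) div 2 = h div 2 + E1" for h by simp
  have m2: "M ((h + 2 * E1) div 2) = l2 (h div 2)" if "h \<in> set (hall D2)" for h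
    unfolding e2 by (rule m2a[OF that])
  have s1: "l1 (h div 2) \<in> soidx N" if "h \<in> set (hall D1)" for h using l1 H1[OF that] by (auto simp: E1_def)
  have s2: "l2 (h div 2) \<in> soidx N" if "h \<in> set (hall D2)" for h using l2 H2[OF that] by (auto simp: E2_def)
  have hv2: "hvec N w M (h + 2 * E1) = hvec N w l2 h" if "h \<in> set (hall D2)" for h
  proof -
    have ev: "even (h + 2 * E1) = even h" by simp
    show ?thesis unfolding hvec_def e2 ev unfolding m2a[OF that] ..
  qed
  have V: "vprod N w M (jd_tri (stack D1 D2)) = vprod N w l1 (jd_tri D1) * vprod N w l2 (jd_tri D2)"
  proof -
    have "vprod N w M (jd_tri (stack D1 D2)) = vprod N w M (jd_tri D1) *
       vprod N w M (map (\<lambda>(a, b, c). (a + 2 * E1, b + 2 * E1, c + 2 * E1)) (jd_tri D2))"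
      by (simp add: stack_def vprod_append E1_def)
    also have "vprod N w M (jd_tri D1) = vprod N w l1 (jd_tri D1)"
      by (rule vprod_cong) (use m1 in \<open>auto simp: hall_def\<close>)
    also have "vprod N w M (map (\<lambda>(a, b, c). (a + 2 * E1, b + 2 * E1, c + 2 * E1)) (jd_tri D2)) = vprod N w l2 (jd_tri D2)"
      by (rule vprod_map) (use hv2 in \<open>auto simp: hall_def\<close>)
    finally show ?thesis .
  qed
  have S: "strand_prod N w M (jd_str1 (stack D1 D2)) = strand_prod N w l1 (jd_str1 D1) * strand_prod N w l2 (jd_str1 D2)
     \<and> strand_prod N w M (jd_str2 (stack D1 D2)) = strand_prod N w l1 (jd_str2 D1) * strand_prod N w l2 (jd_str2 D2)"
  proof -
    have gen: "strand_prod N w M (xs @ map (\<lambda>h. h + 2 * E1) ys) = strand_prod N w l1 xs * strand_prod N w l2 ys"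
      if xs: "set xs \<subseteq> set (hall D1)" and ys: "set ys \<subseteq> set (hall D2)" for xs ys
    proof -
      have a: "\<forall>h\<in>set xs. M (h div 2) \<in> soidx N" using xs m1 s1 by auto
      have b: "\<forall>h\<in>set (map (\<lambda>h. h + 2 * E1) ys). M (h div 2) \<in> soidx N" using ys m2 s2 by auto
      have "strand_prod N w M (xs @ map (\<lambda>h. h + 2 * E1) ys) = strand_prod N w M xs * strand_prod N w M (map (\<lambda>h. h + 2 * E1) ys)"
        by (rule strand_append[OF d a b])
      also have "strand_prod N w M xs = strand_prod N w l1 xs"
        by (rule strand_cong) (use xs m1 in auto)
      also have "strand_prod N w M (map (\<lambda>h. h + 2 * E1) ys) = strand_prod N w l2 ys"
        by (rule strand_map) (use ys hv2 in auto)
      finally show ?thesis .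
    qed
    have sub: "set (jd_str1 D1) \<subseteq> set (hall D1)" "set (jd_str1 D2) \<subseteq> set (hall D2)"
       "set (jd_str2 D1) \<subseteq> set (hall D1)" "set (jd_str2 D2) \<subseteq> set (hall D2)" by (auto simp: hall_def)
    show ?thesis
      using gen[OF sub(1,2)] gen[OF sub(3,4)]
      by (simp add: stack_def E1_def)
  qed
  show ?thesis
    unfolding summ_def M_def[symmetric] E1_def[symmetric] E2_def[symmetric] V
    using S by simp
qed



lemma sum_swap_inner: "(\<Sum>x\<in>A. \<Sum>y\<in>B. \<Sum>z\<in>C. f x y z) = (\<Sum>x\<in>A. \<Sum>z\<in>C. \<Sum>y\<in>B. f x y z)"
  by (rule sum.cong[OF refl], rule sum.swap)

lemma sum_swap_inner2: "(\<Sum>x\<in>A. \<Sum>y\<in>B. \<Sum>z\<in>C. \<Sum>u\<in>D. f x y z u) = (\<Sum>x\<in>A. \<Sum>y\<in>B. \<Sum>u\<in>D. \<Sum>z\<in>C. f x y z u)"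
  by (rule sum.cong[OF refl], rule sum.cong[OF refl], rule sum.swap)

lemma W_stack:
  fixes w :: "nat \<times> nat \<Rightarrow> 'k::field_char_0 mat"
  assumes d: "is_dual_basis N w" and w1: "wf_jdiag D1" and w2: "wf_jdiag D2"
  shows "W_St N w (stack D1 D2) = mult2 N (W_St N w D1) (W_St N w D2)"
proof (intro ext)
  fix p q :: "nat \<times> nat"
  obtain i1 i2 where p: "p = (i1, i2)" by (cases p)
  obtain j1 j2 where q: "q = (j1, j2)" by (cases q)
  show "W_St N w (stack D1 D2) p q = mult2 N (W_St N w D1) (W_St N w D2) p q"
  proof (cases "p \<in> idx2 N \<and> q \<in> idx2 N")
    case False thus ?thesis unfolding p q by (auto simp: W_St_eq mult2_def)
  next
    case True
    hence ij: "i1 < N" "i2 < N" "j1 < N" "j2 < N" unfolding p q by (auto simp: idx2_def)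
    define P1 where "P1 = {..<jd_edges D1} \<rightarrow>\<^sub>E soidx N"
    define P2 where "P2 = {..<jd_edges D2} \<rightarrow>\<^sub>E soidx N"
    define A1 where "A1 = (\<lambda>l. strand_prod N w l (jd_str1 D1))"
    define B1 where "B1 = (\<lambda>l. strand_prod N w l (jd_str2 D1))"
    define A2 where "A2 = (\<lambda>l. strand_prod N w l (jd_str1 D2))"
    define B2 where "B2 = (\<lambda>l. strand_prod N w l (jd_str2 D2))"
    define V1 where "V1 = (\<lambda>l. vprod N w l (jd_tri D1))"
    define V2 where "V2 = (\<lambda>l. vprod N w l (jd_tri D2))"
    define F where "F = (\<lambda>l1 l2. V1 l1 * V2 l2 * (A1 l1 * A2 l2) $$ (i1,j1) * (B1 l1 * B2 l2) $$ (i2,j2))"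
    have LHS: "W_St N w (stack D1 D2) p q = (\<Sum>l1\<in>P1. \<Sum>l2\<in>P2. F l1 l2)"
    proof -
      have "W_St N w (stack D1 D2) p q = (\<Sum>l \<in> {..<jd_edges D1 + jd_edges D2} \<rightarrow>\<^sub>E soidx N. summ N w (stack D1 D2) l i1 i2 j1 j2)"
        using True unfolding p q by (simp add: W_St_eq stack_def del: idx2_def)
      also have "\<dots> = (\<Sum>l1\<in>P1. \<Sum>l2\<in>P2. summ N w (stack D1 D2) (merge (jd_edges D1) (jd_edges D2) l1 l2) i1 i2 j1 j2)"
        unfolding P1_def P2_def by (rule sum_PiE_split)
      also have "\<dots> = (\<Sum>l1\<in>P1. \<Sum>l2\<in>P2. F l1 l2)"
        unfolding F_def V1_def V2_def A1_def A2_def B1_def B2_def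
        by (intro sum.cong refl) (rule summ_stack[OF d w1 w2], simp_all add: P1_def P2_def)
      finally show ?thesis .
    qed
    have inner: "(\<Sum>k1<N. \<Sum>k2<N. summ N w D1 l1 i1 i2 k1 k2 * summ N w D2 l2 k1 k2 j1 j2) = F l1 l2"
      if l1: "l1 \<in> P1" and l2: "l2 \<in> P2" for l1 l2
    proof -
      have L1: "\<forall>h\<in>set (hall D1). l1 (h div 2) \<in> soidx N" using hall_lab[OF w1] l1 by (simp add: P1_def)
      have L2: "\<forall>h\<in>set (hall D2). l2 (h div 2) \<in> soidx N" using hall_lab[OF w2] l2 by (simp add: P2_def)
      have cA1: "A1 l1 \<in> carrier_mat N N" unfolding A1_def by (rule strand_carrier[OF d]) (use L1 in \<open>auto simp: hall_def\<close>)
      have cB1: "B1 l1 \<in> carrier_mat N N" unfolding B1_def by (rule strand_carrier[OF d]) (use L1 in \<open>auto simp: hall_def\<close>)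
      have cA2: "A2 l2 \<in> carrier_mat N N" unfolding A2_def by (rule strand_carrier[OF d]) (use L2 in \<open>auto simp: hall_def\<close>)
      have cB2: "B2 l2 \<in> carrier_mat N N" unfolding B2_def by (rule strand_carrier[OF d]) (use L2 in \<open>auto simp: hall_def\<close>)
      have "(\<Sum>k1<N. \<Sum>k2<N. summ N w D1 l1 i1 i2 k1 k2 * summ N w D2 l2 k1 k2 j1 j2)
          = (\<Sum>k1<N. \<Sum>k2<N. (V1 l1 * V2 l2) * ((A1 l1 $$ (i1,k1) * A2 l2 $$ (k1,j1)) * (B1 l1 $$ (i2,k2) * B2 l2 $$ (k2,j2))))"
        unfolding summ_def V1_def V2_def A1_def A2_def B1_def B2_def by (simp only: ac_simps)
      also have "\<dots> = (V1 l1 * V2 l2) * ((\<Sum>k1<N. A1 l1 $$ (i1,k1) * A2 l2 $$ (k1,j1)) * (\<Sum>k2<N. B1 l1 $$ (i2,k2) * B2 l2 $$ (k2,j2)))"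
        unfolding sum_product by (simp only: sum_distrib_left)
      also have "\<dots> = F l1 l2"
        unfolding F_def mult_entry[OF cA1 cA2 ij(1) ij(3)] mult_entry[OF cB1 cB2 ij(2) ij(4)] by (simp only: ac_simps)
      finally show ?thesis .
    qed
    have "mult2 N (W_St N w D1) (W_St N w D2) p q = (\<Sum>r\<in>idx2 N. W_St N w D1 (i1,i2) r * W_St N w D2 r (j1,j2))"
      using True unfolding p q by (simp add: mult2_def del: idx2_def)
    also have "\<dots> = (\<Sum>(k1,k2)\<in>idx2 N. (\<Sum>l1\<in>P1. summ N w D1 l1 i1 i2 k1 k2) * (\<Sum>l2\<in>P2. summ N w D2 l2 k1 k2 j1 j2))"
      by (rule sum.cong[OF refl]) (use ij in \<open>auto simp: W_St_eq idx2_def P1_def P2_def\<close>)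
    also have "\<dots> = (\<Sum>k1<N. \<Sum>k2<N. (\<Sum>l1\<in>P1. summ N w D1 l1 i1 i2 k1 k2) * (\<Sum>l2\<in>P2. summ N w D2 l2 k1 k2 j1 j2))"
      unfolding idx2_def by (rule sum.cartesian_product[symmetric])
    also have "\<dots> = (\<Sum>k1<N. \<Sum>k2<N. \<Sum>l1\<in>P1. \<Sum>l2\<in>P2. summ N w D1 l1 i1 i2 k1 k2 * summ N w D2 l2 k1 k2 j1 j2)"
      by (simp only: sum_product)
    also have "\<dots> = (\<Sum>k1<N. \<Sum>l1\<in>P1. \<Sum>k2<N. \<Sum>l2\<in>P2. summ N w D1 l1 i1 i2 k1 k2 * summ N w D2 l2 k1 k2 j1 j2)"
      by (rule sum_swap_inner)
    also have "\<dots> = (\<Sum>l1\<in>P1. \<Sum>k1<N. \<Sum>k2<N. \<Sum>l2\<in>P2. summ N w D1 l1 i1 i2 k1 k2 * summ N w D2 l2 k1 k2 j1 j2)"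
      by (rule sum.swap)
    also have "\<dots> = (\<Sum>l1\<in>P1. \<Sum>k1<N. \<Sum>l2\<in>P2. \<Sum>k2<N. summ N w D1 l1 i1 i2 k1 k2 * summ N w D2 l2 k1 k2 j1 j2)"
      by (rule sum_swap_inner2)
    also have "\<dots> = (\<Sum>l1\<in>P1. \<Sum>l2\<in>P2. \<Sum>k1<N. \<Sum>k2<N. summ N w D1 l1 i1 i2 k1 k2 * summ N w D2 l2 k1 k2 j1 j2)"
      by (rule sum_swap_inner)
    also have "\<dots> = (\<Sum>l1\<in>P1. \<Sum>l2\<in>P2. F l1 l2)"
      by (rule sum.cong[OF refl], rule sum.cong[OF refl], rule inner)
    finally show ?thesis using LHS by simp
  qed
qed



lemma img_I: "\<forall>i<(n::nat). wf_jdiag (Ds i) \<Longrightarrow> (\<lambda>p q. \<Sum>i<n. c i * W_St N w (Ds i) p q) \<in> W_St_image N w"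
  unfolding W_St_image_def by blast

lemma img_E:
  assumes "X \<in> W_St_image N w"
  obtains n c Ds where "\<forall>i<(n::nat). wf_jdiag (Ds i)" "X = (\<lambda>p q. \<Sum>i<n. c i * W_St N w (Ds i) p q)"
  using assms unfolding W_St_image_def by blast

lemma img_zero: "(\<lambda>p q. 0) \<in> W_St_image N w"
proof -
  have "(\<lambda>p q. \<Sum>i<(0::nat). (\<lambda>_. 0) i * W_St N w ((\<lambda>_. undefined) i) p q) \<in> W_St_image N w"
    by (rule img_I) simp
  thus ?thesis by simp
qed

lemma img_step:
  assumes X: "X \<in> W_St_image N w" and D: "wf_jdiag D"
  shows "(\<lambda>p q. X p q + a * W_St N w D p q) \<in> W_St_image N w"
proof -
  obtain n c Ds where wf: "\<forall>i<(n::nat). wf_jdiag (Ds i)" and Xe: "X = (\<lambda>p q. \<Sum>i<n. c i * W_St N w (Ds i) p q)"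
    using img_E[OF X] by blast
  have wf': "\<forall>i<Suc n. wf_jdiag ((Ds(n := D)) i)" using wf D by auto
  have "(\<lambda>p q. \<Sum>i<Suc n. (c(n := a)) i * W_St N w ((Ds(n := D)) i) p q) \<in> W_St_image N w"
    by (rule img_I[OF wf'])
  moreover have "(\<lambda>p q. \<Sum>i<Suc n. (c(n := a)) i * W_St N w ((Ds(n := D)) i) p q) = (\<lambda>p q. X p q + a * W_St N w D p q)"
  proof (intro ext)
    fix p q
    have "(\<Sum>i<n. (c(n := a)) i * W_St N w ((Ds(n := D)) i) p q) = (\<Sum>i<n. c i * W_St N w (Ds i) p q)"
      by (rule sum.cong) auto
    thus "(\<Sum>i<Suc n. (c(n := a)) i * W_St N w ((Ds(n := D)) i) p q) = X p q + a * W_St N w D p q"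
      unfolding Xe by simp
  qed
  ultimately show ?thesis by simp
qed

lemma img_add_lin_aux:
  assumes X: "X \<in> W_St_image N w"
  shows "\<forall>i<(n::nat). wf_jdiag (Ds i) \<Longrightarrow> (\<lambda>p q. X p q + a * (\<Sum>i<n. c i * W_St N w (Ds i) p q)) \<in> W_St_image N w"
proof (induction n)
  case 0 thus ?case using X by simp
next
  case (Suc n)
  have "(\<lambda>p q. (X p q + a * (\<Sum>i<n. c i * W_St N w (Ds i) p q)) + (a * c n) * W_St N w (Ds n) p q) \<in> W_St_image N w"
    using img_step[OF Suc.IH] Suc.prems by simp
  moreover have "(\<lambda>p q. (X p q + a * (\<Sum>i<n. c i * W_St N w (Ds i) p q)) + (a * c n) * W_St N w (Ds n) p q)
     = (\<lambda>p q. X p q + a * (\<Sum>i<Suc n. c i * W_St N w (Ds i) p q))"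
    by (simp add: algebra_simps)
  ultimately show ?case by simp
qed

lemma img_add_lin:
  assumes X: "X \<in> W_St_image N w" and Y: "Y \<in> W_St_image N w"
  shows "(\<lambda>p q. X p q + a * Y p q) \<in> W_St_image N w"
proof -
  obtain n c Ds where wf: "\<forall>i<(n::nat). wf_jdiag (Ds i)" and Ye: "Y = (\<lambda>p q. \<Sum>i<n. c i * W_St N w (Ds i) p q)"
    using img_E[OF Y] by blast
  show ?thesis unfolding Ye using img_add_lin_aux[OF X wf] by simp
qed

lemma img_scale:
  assumes X: "X \<in> W_St_image N w"
  shows "(\<lambda>p q. a * X p q) \<in> W_St_image N w"
  using img_add_lin[OF img_zero X, of a] by simp

lemma img_add:
  assumes X: "X \<in> W_St_image N w" and Y: "Y \<in> W_St_image N w"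
  shows "(\<lambda>p q. X p q + Y p q) \<in> W_St_image N w"
  using img_add_lin[OF X Y, of 1] by simp

lemma img_single: "wf_jdiag D \<Longrightarrow> W_St N w D \<in> W_St_image N w"
  using img_step[OF img_zero, of D 1] by simp

definition empty_jd :: jdiag where
  "empty_jd = \<lparr>jd_edges = 0, jd_tri = [], jd_str1 = [], jd_str2 = []\<rparr>"

lemma wf_empty: "wf_jdiag empty_jd"
  by (simp add: wf_jdiag_def empty_jd_def)

lemma W_empty: "W_St N w empty_jd = one2 N"
proof (intro ext)
  fix p q :: "nat \<times> nat"
  obtain i1 i2 where p: "p = (i1, i2)" by (cases p)
  obtain j1 j2 where q: "q = (j1, j2)" by (cases q)
  show "W_St N w empty_jd p q = one2 N p q"
    unfolding p q by (auto simp: W_St_eq one2_def summ_def vprod_def empty_jd_def strand_prod_Nil idx2_def)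
qed

lemma mult2_lin_left:
  "mult2 N (\<lambda>p q. X p q + a * Z p q) Y = (\<lambda>p q. mult2 N X Y p q + a * mult2 N Z Y p q)"
  by (intro ext) (simp add: mult2_def algebra_simps sum.distrib sum_distrib_left)

lemma mult2_lin_right:
  "mult2 N Y (\<lambda>p q. X p q + a * Z p q) = (\<lambda>p q. mult2 N Y X p q + a * mult2 N Y Z p q)"
  by (intro ext) (simp add: mult2_def algebra_simps sum.distrib sum_distrib_left)

lemma mult2_zero_left: "mult2 N (\<lambda>p q. 0) Y = (\<lambda>p q. 0)"
  by (intro ext) (simp add: mult2_def)

lemma mult2_zero_right: "mult2 N Y (\<lambda>p q. 0) = (\<lambda>p q. 0)"
  by (intro ext) (simp add: mult2_def)

lemma sum_Suc_fun: "(\<lambda>p q. \<Sum>i<Suc (n::nat). c i * W_St N w (Ds i) p q) =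
   (\<lambda>p q. (\<Sum>i<n. c i * W_St N w (Ds i) p q) + c n * W_St N w (Ds n) p q)"
  by simp

lemma sum_0_fun: "(\<lambda>p q. \<Sum>i<(0::nat). c i * W_St N w (Ds i) p q) = (\<lambda>p q. 0)"
  by simp

lemma img_mult_single:
  fixes w :: "nat \<times> nat \<Rightarrow> 'k::field_char_0 mat"
  assumes d: "is_dual_basis N w" and D: "wf_jdiag D" and Y: "Y \<in> W_St_image N w"
  shows "mult2 N (W_St N w D) Y \<in> W_St_image N w"
proof -
  obtain n c Ds where wf: "\<forall>i<(n::nat). wf_jdiag (Ds i)" and Ye: "Y = (\<lambda>p q. \<Sum>i<n. c i * W_St N w (Ds i) p q)"
    using img_E[OF Y] by blast
  have "mult2 N (W_St N w D) (\<lambda>p q. \<Sum>i<n. c i * W_St N w (Ds i) p q) \<in> W_St_image N w" using wf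
  proof (induction n)
    case 0 thus ?case by (simp only: sum_0_fun mult2_zero_right img_zero)
  next
    case (Suc n)
    have ih: "mult2 N (W_St N w D) (\<lambda>p q. \<Sum>i<n. c i * W_St N w (Ds i) p q) \<in> W_St_image N w"
      using Suc by simp
    have st: "mult2 N (W_St N w D) (W_St N w (Ds n)) \<in> W_St_image N w"
    proof -
      have wfn: "wf_jdiag (Ds n)" using Suc.prems by simp
      show ?thesis unfolding W_stack[OF d D wfn, symmetric] by (rule img_single[OF wf_stack[OF D wfn]])
    qed
    show ?case unfolding sum_Suc_fun mult2_lin_right by (rule img_add_lin[OF ih st])
  qed
  thus ?thesis unfolding Ye .
qed

lemma img_mult:
  fixes w :: "nat \<times> nat \<Rightarrow> 'k::field_char_0 mat"
  assumes d: "is_dual_basis N w" and X: "X \<in> W_St_image N w" and Y: "Y \<in> W_St_image N w"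
  shows "mult2 N X Y \<in> W_St_image N w"
proof -
  obtain n c Ds where wf: "\<forall>i<(n::nat). wf_jdiag (Ds i)" and Xe: "X = (\<lambda>p q. \<Sum>i<n. c i * W_St N w (Ds i) p q)"
    using img_E[OF X] by blast
  have "mult2 N (\<lambda>p q. \<Sum>i<n. c i * W_St N w (Ds i) p q) Y \<in> W_St_image N w" using wf
  proof (induction n)
    case 0 thus ?case by (simp only: sum_0_fun mult2_zero_left img_zero)
  next
    case (Suc n)
    have ih: "mult2 N (\<lambda>p q. \<Sum>i<n. c i * W_St N w (Ds i) p q) Y \<in> W_St_image N w"
      using Suc by simp
    have st: "mult2 N (W_St N w (Ds n)) Y \<in> W_St_image N w"
      using img_mult_single[OF d _ Y] Suc.prems by simp
    show ?case unfolding sum_Suc_fun mult2_lin_left by (rule img_add_lin[OF ih st])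
  qed
  thus ?thesis unfolding Xe .
qed

lemma img_sym:
  fixes w :: "nat \<times> nat \<Rightarrow> 'k::field_char_0 mat"
  assumes d: "is_dual_basis N w" and X: "X \<in> W_St_image N w"
  shows "X p q = X q p"
proof -
  obtain n c Ds where wf: "\<forall>i<(n::nat). wf_jdiag (Ds i)" and Xe: "X = (\<lambda>p q. \<Sum>i<n. c i * W_St N w (Ds i) p q)"
    using img_E[OF X] by blast
  show ?thesis unfolding Xe by (rule sum.cong[OF refl]) (use W_sym[OF d] wf in simp)
qed

lemma img_comm:
  fixes w :: "nat \<times> nat \<Rightarrow> 'k::field_char_0 mat"
  assumes d: "is_dual_basis N w" and X: "X \<in> W_St_image N w" and Y: "Y \<in> W_St_image N w"
  shows "mult2 N X Y = mult2 N Y X"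
proof (intro ext)
  fix p q
  have "mult2 N X Y p q = mult2 N X Y q p" by (rule img_sym[OF d img_mult[OF d X Y]])
  also have "\<dots> = mult2 N Y X p q"
    unfolding mult2_def using img_sym[OF d X] img_sym[OF d Y]
    by (auto intro!: sum.cong simp: mult.commute)
  finally show "mult2 N X Y p q = mult2 N Y X p q" .
qed

theorem corollary5p8:
  fixes N :: nat and w :: "nat \<times> nat \<Rightarrow> 'k::field_char_0 mat"
  assumes "N \<ge> 2"
    and "is_dual_basis N w"
  shows "(\<forall>X\<in>W_St_image N w. \<forall>Y\<in>W_St_image N w.
             (\<lambda>p q. X p q + Y p q) \<in> W_St_image N w \<and> mult2 N X Y \<in> W_St_image N w)
       \<and> (\<forall>c. \<forall>X\<in>W_St_image N w. (\<lambda>p q. c * X p q) \<in> W_St_image N w)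
       \<and> one2 N \<in> W_St_image N w
       \<and> (\<forall>X\<in>W_St_image N w. \<forall>Y\<in>W_St_image N w. mult2 N X Y = mult2 N Y X)"
proof -
  have one: "one2 N \<in> W_St_image N w"
    using img_single[OF wf_empty, of N w] by (simp only: W_empty)
  show ?thesis
  proof (intro conjI ballI allI)
    fix X Y assume X: "X \<in> W_St_image N w" and Y: "Y \<in> W_St_image N w"
    show "(\<lambda>p q. X p q + Y p q) \<in> W_St_image N w" by (rule img_add[OF X Y])
    show "mult2 N X Y \<in> W_St_image N w" by (rule img_mult[OF assms(2) X Y])
    show "mult2 N X Y = mult2 N Y X" by (rule img_comm[OF assms(2) X Y])
  next
    fix c X assume X: "X \<in> W_St_image N w"
    show "(\<lambda>p q. c * X p q) \<in> W_St_image N w" by (rule img_scale[OF X])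
  next
    show "one2 N \<in> W_St_image N w" by (rule one)
  qed
qed

end
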